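(* Let $q$ be a power of $3$, and pick $a,b,c,d,e\in\mathbb{F}_q$ with $e\ne 0$. Then $\varphi\colon (x,y)\mapsto (x^3-exy^2-ax-by,\, y^3-cx-dy)$ permutes $\mathbb{F}_q\times\mathbb{F}_q$ if and only if $c=0$, $d$ is either zero or a nonsquare in $\mathbb{F}_q$, and one of the following holds: (i) $a=0$ and $e$ is a nonsquare in $\mathbb{F}_q$; or (ii) $q=3$, $a=-1$, and $e=1$. *)

theory Defs
  imports Main
begin

definition is_square :: "'a::field \<Rightarrow> bool" where
  "is_square x \<longleftrightarrow> (\<exists>t. x = t ^ 2)"

end

theory Submission imports Defs begin

lemma orb3:
  fixes h :: "'a::field"
  assumes three: "(3::'a) = 0" and two: "(2::'a) \<noteq> 0" and h: "h \<noteq> 0"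
  shows "finite S \<Longrightarrow> (\<forall>x\<in>S. x + h \<in> S) \<Longrightarrow> 3 dvd card S"
proof (induction "card S" arbitrary: S rule: less_induct)
  case less
  show ?case
  proof (cases "S = {}")
    case True then show ?thesis by simp
  next
    case False
    then obtain x where x: "x \<in> S" by blast
    have x1: "x + h \<in> S" using less.prems x by blast
    have x2: "x + h + h \<in> S" using less.prems x1 by blast
    have hh: "h + h \<noteq> 0" using two h
      by (metis mult_2 mult_eq_0_iff)
    have d1: "x \<noteq> x + h" using h by simp
    have d2: "x \<noteq> x + h + h" using hh by (metis add.assoc add_cancel_left_right)
    have d3: "x + h \<noteq> x + h + h" using h by (metis add_cancel_left_right)
    define T where "T = S - {x, x + h, x + h + h}"
    have sub: "{x, x + h, x + h + h} \<subseteq> S" using x x1 x2 by blast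
    have cT: "card T = card S - 3"
      unfolding T_def using sub less.prems(1) d1 d2 d3
      by (simp add: card_Diff_subset finite_subset)
    have cS: "card S \<ge> 3"
    proof -
      have "card {x, x + h, x + h + h} = 3" using d1 d2 d3 by simp
      moreover have "card {x, x + h, x + h + h} \<le> card S"
        using sub less.prems(1) by (rule card_mono[rotated])
      ultimately show ?thesis by simp
    qed
    have h3: "h + h + h = 0"
    proof -
      have "h + h + h = 3 * h" by (simp add: algebra_simps numeral_3_eq_3)
      then show ?thesis using three by simp
    qed
    have inv: "\<forall>y\<in>T. y + h \<in> T"
    proof
      fix y assume y: "y \<in> T"
      then have yS: "y \<in> S" and yn: "y \<notin> {x, x + h, x + h + h}" unfolding T_def by auto
      have "y + h \<in> S" using less.prems yS by blast
      moreover have "y + h \<noteq> x"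
      proof
        assume "y + h = x"
        then have "y = x + h + h" using h3
          by (metis add.assoc add_diff_cancel_right' add_diff_eq diff_add_cancel eq_neg_iff_add_eq_0 minus_diff_eq)
        then show False using yn by simp
      qed
      moreover have "y + h \<noteq> x + h" using yn by auto
      moreover have "y + h \<noteq> x + h + h" using yn by auto
      ultimately show "y + h \<in> T" unfolding T_def by auto
    qed
    have "3 dvd card T"
      using less.hyps[of T] cT cS inv less.prems(1) False unfolding T_def
      by (metis (no_types, lifting) T_def cT card_gt_0_iff diff_less finite_Diff zero_less_numeral)
    then show ?thesis using cT cS by (metis dvd_diff_nat dvd_refl le_add_diff_inverse2 dvd_add)
  qed
qed

lemma card_squares:
  assumes two: "(2::'a::{finite,field}) \<noteq> 0"
  shows "2 * card (range (\<lambda>t::'a. t^2)) = card (UNIV::'a set) + 1"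
proof -
  define P where "P = (UNIV::'a set) - {0}"
  define g where "g = (\<lambda>t::'a. t^2)"
  have fib: "card {x. x \<in> P \<and> g x = y} = 2" if yin: "y \<in> g ` P" for y
  proof -
    obtain w where w: "w \<in> P" "y = w^2" using yin unfolding g_def by blast
    have "{x. x \<in> P \<and> g x = y} = {w, -w}"
      using w unfolding P_def g_def by (auto simp: power2_eq_iff)
    moreover have "w \<noteq> -w"
    proof
      assume "w = -w"
      then have "2 * w = 0" by (metis mult_2 add_eq_0_iff)
      then show False using two w unfolding P_def by simp
    qed
    ultimately show ?thesis by simp
  qed
  have "card P = (\<Sum>y\<in>g ` P. card {x. x \<in> P \<and> g x = y})"
    using sum.image_gen[of P "\<lambda>_. (1::nat)" g] by (simp add: card_eq_sum[symmetric])
  also have "\<dots> = (\<Sum>y\<in>g ` P. 2)" using fib by simp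
  also have "\<dots> = 2 * card (g ` P)" by simp
  finally have cP: "card P = 2 * card (g ` P)" .
  have cP2: "card P = card (UNIV::'a set) - 1" unfolding P_def by (simp add: card_Diff_subset)
  have R: "range g = insert 0 (g ` P)" unfolding g_def P_def
    by (auto simp: image_iff)
  have n0: "0 \<notin> g ` P" unfolding g_def P_def by auto
  have "card (range g) = card (g ` P) + 1" using R n0 by simp
  moreover have "card (UNIV::'a set) \<ge> 1"
    by (simp add: Suc_leI finite_UNIV_card_ge_0)
  ultimately show ?thesis using cP cP2 unfolding g_def by simp
qed

lemma claimC:
  fixes a e :: "'a::{finite,field}"
  assumes three: "(3::'a) = 0" and two: "(2::'a) \<noteq> 0" and e0: "e \<noteq> 0"
    and H: "\<forall>y t. e * y^2 + a = t^2 \<longrightarrow> t = 0"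
  shows "(a = 0 \<and> \<not> is_square e) \<or> (card (UNIV :: 'a set) = 3 \<and> a = -1 \<and> e = 1)"
proof -
  define Q where "Q = range (\<lambda>t::'a. t^2)"
  define N0 where "N0 = {x::'a. x = 0 \<or> \<not> is_square x}"
  have sqQ: "is_square x \<longleftrightarrow> x \<in> Q" for x unfolding Q_def is_square_def by auto
  have q3: "3 dvd card (UNIV::'a set)"
    using orb3[OF three two, of 1 UNIV] by simp
  have cQ: "2 * card Q = card (UNIV::'a set) + 1" unfolding Q_def by (rule card_squares[OF two])
  have Q0: "0 \<in> Q" unfolding Q_def by (auto simp: image_iff)
  have N0eq: "N0 = UNIV - (Q - {0})" unfolding N0_def using sqQ by auto
  have cN0: "card N0 = card Q"
  proof -
    have "card N0 = card (UNIV::'a set) - card (Q - {0})" unfolding N0eq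
      by (simp add: card_Diff_subset)
    also have "card (Q - {0}) = card Q - 1" using Q0 by simp
    finally show ?thesis using cQ by simp
  qed
  have nQ3: "\<not> 3 dvd card Q" using cQ q3 by presburger
  have fQ: "finite Q" by simp
  show ?thesis
  proof (cases "is_square e")
    case False
    show ?thesis
    proof (cases "a = 0")
      case True then show ?thesis using False by simp
    next
      case a0: False
      have sub: "(\<lambda>x. e * x) ` Q \<subseteq> N0"
      proof
        fix z assume "z \<in> (\<lambda>x. e * x) ` Q"
        then obtain t where z: "z = e * t^2" unfolding Q_def by auto
        show "z \<in> N0"
        proof (cases "t = 0")
          case True then show ?thesis using z unfolding N0_def by simp
        next
          case t0: False
          have "\<not> is_square z"
          proof
            assume "is_square z"
            then obtain r where "z = r^2" unfolding is_square_def by auto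
            then have "e = (r / t)^2" using z t0 by (simp add: field_simps)
            then show False using False unfolding is_square_def by auto
          qed
          then show ?thesis unfolding N0_def by simp
        qed
      qed
      have "card ((\<lambda>x. e * x) ` Q) = card Q"
        by (rule card_image) (simp add: inj_on_def e0)
      then have eqN: "(\<lambda>x. e * x) ` Q = N0"
        using sub cN0 by (metis card_subset_eq finite)
      have "\<forall>x\<in>N0. x + a \<in> N0"
      proof
        fix x assume "x \<in> N0"
        then obtain t where x: "x = e * t^2" using eqN unfolding Q_def by auto
        show "x + a \<in> N0"
        proof (rule ccontr)
          assume "x + a \<notin> N0"
          then obtain r where r: "x + a = r^2" "r \<noteq> 0" unfolding N0_def is_square_def by auto
          then show False using H x by auto
        qed
      qed
      then have "3 dvd card N0" using orb3[OF three two a0, of N0] by simp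
      then show ?thesis using cN0 nQ3 by simp
    qed
  next
    case True
    then obtain s where s: "e = s^2" unfolding is_square_def by auto
    have s0: "s \<noteq> 0" using s e0 by auto
    have Hu: "t^2 + w^2 * a = r^2 \<Longrightarrow> r = 0" if w0: "w \<noteq> 0" for w t r :: 'a
    proof -
      assume eq: "t^2 + w^2 * a = r^2"
      have "e * (t / (w * s))^2 + a = (r / w)^2"
        using eq w0 s0 s by (simp add: field_simps power2_eq_square)
      then have "r / w = 0" using H by blast
      then show "r = 0" using w0 by simp
    qed
    have a0: "a \<noteq> 0"
    proof
      assume "a = 0"
      then have "e * (1/s)^2 + a = 1^2" using s s0 by (simp add: field_simps)
      then show False using H by fastforce
    qed
    have SA: "(\<lambda>x. x + w^2 * a) ` Q = N0" if w0: "w \<noteq> 0" for w :: 'a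
    proof -
      have sub: "(\<lambda>x. x + w^2 * a) ` Q \<subseteq> N0"
      proof
        fix z assume "z \<in> (\<lambda>x. x + w^2 * a) ` Q"
        then obtain t where z: "z = t^2 + w^2 * a" unfolding Q_def by auto
        show "z \<in> N0"
        proof (rule ccontr)
          assume "z \<notin> N0"
          then obtain r where r: "z = r^2" "r \<noteq> 0" unfolding N0_def is_square_def by auto
          then show False using Hu[OF w0, of t r] z by auto
        qed
      qed
      have "card ((\<lambda>x. x + w^2 * a) ` Q) = card Q"
        by (rule card_image) (simp add: inj_on_def)
      then show ?thesis using sub cN0 by (metis card_subset_eq finite)
    qed
    have w1: "w = 1 \<or> w = -1" if w0: "w \<noteq> 0" for w :: 'a
    proof -
      have "w^2 * a = a"
      proof (rule ccontr)
        assume ne: "w^2 * a \<noteq> a"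
        have "\<forall>x\<in>Q. x + (w^2 * a - a) \<in> Q"
        proof
          fix x assume xQ: "x \<in> Q"
          have "x + w^2 * a \<in> N0" using SA[OF w0] xQ by blast
          then have "x + w^2 * a \<in> (\<lambda>x. x + 1^2 * a) ` Q" using SA[of 1] by simp
          then obtain x' where "x' \<in> Q" "x + w^2 * a = x' + a" by auto
          then show "x + (w^2 * a - a) \<in> Q" by (simp add: algebra_simps)
        qed
        then have "3 dvd card Q" using orb3[OF three two, of "w^2 * a - a" Q] ne by simp
        then show False using nQ3 by simp
      qed
      then have "w^2 = 1^2" using a0 by simp
      then show ?thesis by (metis power2_eq_iff)
    qed
    have U: "(UNIV::'a set) = {0, 1, -1}" using w1 by auto
    have d: "(1::'a) \<noteq> -1"
    proof
      assume "(1::'a) = -1"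
      then have "(2::'a) = 0" by (metis one_add_one add_eq_0_iff)
      then show False using two by simp
    qed
    have c3: "card (UNIV::'a set) = 3" unfolding U using d by simp
    have e1: "e = 1" using s w1[OF s0] by auto
    have "a \<noteq> 1"
    proof
      assume "a = 1"
      then have "e * 0^2 + a = 1^2" by simp
      then show False using H by fastforce
    qed
    then have "a = -1" using a0 U by auto
    then show ?thesis using c3 e1 by simp
  qed
qed

lemma cube_diff:
  fixes u v :: "'a::field"
  assumes three: "(3::'a) = 0"
  shows "(u - v)^3 = u^3 - v^3" and "(u + v)^3 = u^3 + v^3"
proof -
  have "(u - v)^3 = u^3 - v^3 - 3 * (u^2 * v - u * v^2)"
    by (simp add: power2_eq_square power3_eq_cube algebra_simps)
  then show "(u - v)^3 = u^3 - v^3" using three by simp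
  have "(u + v)^3 = u^3 + v^3 + 3 * (u^2 * v + u * v^2)"
    by (simp add: power2_eq_square power3_eq_cube algebra_simps)
  then show "(u + v)^3 = u^3 + v^3" using three by simp
qed

lemma t44: fixes x1 x2 k e a b :: "'a::field"
 assumes x2c: "x2^3 = x1^3 + k^3" and ex1: "e * x1 = k^3 - (e + a) * k - b" and x2: "x2 = x1 + k"
 shows "x1 ^ 3 - e * x1 * 0 ^ 2 - a * x1 - b * 0 = x2 ^ 3 - e * x2 * 1 ^ 2 - a * x2 - b * 1"
proof -
  have "x2 ^ 3 - e * x2 * 1 ^ 2 - a * x2 - b * 1 = x1^3 + k^3 - e * x1 - e*k - a * x1 - a * k - b"
    using x2c x2 by (simp add: algebra_simps)
  also have "\<dots> = x1^3 - a * x1" using ex1 by (simp add: algebra_simps)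
  finally show ?thesis by simp
qed
lemma t131: fixes y :: "'a::field" assumes "y^3 = d * y" "y \<noteq> 0" shows "d = y^2"
proof -
  have "y * (y^2 - d) = 0" using assms(1) by (simp add: power2_eq_square power3_eq_cube algebra_simps)
  then show ?thesis using assms(2) by simp
qed
lemma t115: assumes "(2::'a::field) \<noteq> 0" "(2::'a) = 0 \<or> (2::'a) = 1" shows False
proof -
  have "(2::'a) = 1" using assms by auto
  then have "(2::'a) - 1 = 0" by simp
  then show False by simp
qed
theorem theorem1p6:
  fixes a b c d e :: "'a::{finite, field}"
  assumes "CHAR('a) = 3"
    and "e \<noteq> 0"
  shows "bij (\<lambda>(x, y). (x ^ 3 - e * x * y ^ 2 - a * x - b * y, y ^ 3 - c * x - d * y))
     \<longleftrightarrow> (c = 0 \<and> (d = 0 \<or> \<not> is_square d) \<and>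
          ((a = 0 \<and> \<not> is_square e) \<or> (card (UNIV :: 'a set) = 3 \<and> a = -1 \<and> e = 1)))"
  (is "bij ?f \<longleftrightarrow> ?R")
proof -
  have three: "(3::'a) = 0" using of_nat_eq_0_iff_char_dvd[of 3, where 'a='a] assms(1) by simp
  have two: "(2::'a) \<noteq> 0" using of_nat_eq_0_iff_char_dvd[of 2, where 'a='a] assms(1) by simp
  have e0: "e \<noteq> 0" by fact
  show ?thesis
  proof
    assume bf: "bij ?f"
    then have injf: "inj ?f" and surjf: "surj ?f" by (auto simp: bij_def)
    have c0: "c = 0"
    proof (rule ccontr)
      assume c0: "c \<noteq> 0"
      define k where "k = (1 - d) / c"
      define x1 where "x1 = (k^3 - (e + a) * k - b) / e"
      define x2 where "x2 = x1 + k"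
      have ex1: "e * x1 = k^3 - (e + a) * k - b" unfolding x1_def using e0 by simp
      have ck: "c * k = 1 - d" unfolding k_def using c0 by simp
      have x2c: "x2^3 = x1^3 + k^3" unfolding x2_def by (rule cube_diff(2)[OF three])
      have "?f (x1, 0) = ?f (x2, 1)"
      proof -
        have "x1 ^ 3 - e * x1 * 0 ^ 2 - a * x1 - b * 0 = x2 ^ 3 - e * x2 * 1 ^ 2 - a * x2 - b * 1"
          using t44[OF x2c ex1 x2_def] .
        moreover have "(0::'a) ^ 3 - c * x1 - d * 0 = 1 ^ 3 - c * x2 - d * 1"
          using ck unfolding x2_def by (simp add: algebra_simps)
        ultimately show ?thesis by simp
      qed
      then have "(x1, 0::'a) = (x2, 1)" by (rule injD[OF injf])
      then show False by simp
    qed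
    have dd: "d = 0 \<or> \<not> is_square d"
    proof (rule ccontr)
      assume "\<not> (d = 0 \<or> \<not> is_square d)"
      then obtain s where s: "d = s^2" "s \<noteq> 0" unfolding is_square_def by auto
      define G where "G = (\<lambda>y::'a. y^3 - d * y)"
      have "G s = s * (s^2 - d)" unfolding G_def by (simp add: power2_eq_square power3_eq_cube algebra_simps)
      then have "G s = 0" using s by simp
      moreover have "G 0 = 0" unfolding G_def by simp
      ultimately have "G 0 = G s" "(0::'a) \<noteq> s" using s by auto
      then have "\<not> inj G" unfolding inj_def by blast
      then have "\<not> surj G" using finite_UNIV_surj_inj[of G] by auto
      then obtain v where v: "v \<notin> range G" by auto
      from surjf obtain p where "(0, v) = ?f p" by (rule surjE)
      then obtain x y where "(0, v) = ?f (x, y)" by (cases p) blast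
      then have "G y = v" unfolding G_def using c0 by simp
      then show False using v by auto
    qed
    have H: "\<forall>y t. e * y^2 + a = t^2 \<longrightarrow> t = 0"
    proof (intro allI impI)
      fix y t assume eq: "e * y^2 + a = t^2"
      have "t ^ 3 - e * t * y ^ 2 - a * t - b * y = 0 ^ 3 - e * 0 * y ^ 2 - a * 0 - b * y"
      proof -
        have "t ^ 3 - e * t * y ^ 2 - a * t = t * (t^2 - (e * y^2 + a))"
          by (simp add: power2_eq_square power3_eq_cube algebra_simps)
        then show ?thesis using eq by simp
      qed
      then have "?f (t, y) = ?f (0, y)" by (simp only: case_prod_conv) (simp add: c0)
      then have "(t, y) = (0, y)" by (rule injD[OF injf])
      then show "t = 0" by simp
    qed
    show ?R using c0 dd claimC[OF three two e0 H] by blast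
  next
    assume R: ?R
    then have c0: "c = 0" and dd: "d = 0 \<or> \<not> is_square d" by auto
    have H: "\<forall>y t. e * y^2 + a = t^2 \<longrightarrow> t = 0"
    proof (intro allI impI)
      fix y t :: 'a assume eq: "e * y^2 + a = t^2"
      show "t = 0"
      proof (rule ccontr)
        assume t0: "t \<noteq> 0"
        from R have "(a = 0 \<and> \<not> is_square e) \<or> (card (UNIV :: 'a set) = 3 \<and> a = -1 \<and> e = 1)" by auto
        then show False
        proof
          assume A: "a = 0 \<and> \<not> is_square e"
          then have y0: "y \<noteq> 0" using eq t0 by auto
          have "e = (t / y)^2" using eq A y0 by (simp add: field_simps)
          then show False using A unfolding is_square_def by auto
        next
          assume A: "card (UNIV :: 'a set) = 3 \<and> a = -1 \<and> e = 1"
          have d: "(1::'a) \<noteq> -1"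
          proof
            assume "(1::'a) = -1"
            then have "(2::'a) = 0" by (metis one_add_one add_eq_0_iff)
            then show False using two by simp
          qed
          have "card {0::'a, 1, -1} = 3" using d by simp
          then have U: "{0::'a, 1, -1} = UNIV" using A
            by (metis card_subset_eq finite subset_UNIV)
          have sq: "z^2 = 0 \<or> z^2 = (1::'a)" for z :: 'a
          proof -
            have "z \<in> {0, 1, -1}" using U by simp
            then show ?thesis by auto
          qed
          have "t^2 = 1" using sq[of t] t0 by auto
          then have "y^2 = 2" using eq A by (simp add: algebra_simps)
          then have "(2::'a) = 0 \<or> (2::'a) = 1" using sq[of y] by auto
          then show False using two t115 by blast
        qed
      qed
    qed
    have "inj ?f"
    proof (rule injI)
      fix p1 p2 assume eqp: "?f p1 = ?f p2"
      obtain x1 y1 where p1: "p1 = (x1, y1)" by (cases p1)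
      obtain x2 y2 where p2: "p2 = (x2, y2)" by (cases p2)
      have e1: "x1 ^ 3 - e * x1 * y1 ^ 2 - a * x1 - b * y1 = x2 ^ 3 - e * x2 * y2 ^ 2 - a * x2 - b * y2"
        and e2: "y1 ^ 3 - d * y1 = y2 ^ 3 - d * y2" using eqp c0 unfolding p1 p2 by auto
      have yy: "y1 = y2"
      proof (rule ccontr)
        assume ne: "y1 \<noteq> y2"
        have "(y1 - y2)^3 = y1^3 - y2^3" by (rule cube_diff(1)[OF three])
        also have "\<dots> = d * (y1 - y2)" using e2 by (simp add: algebra_simps)
        finally have "(y1 - y2)^3 = d * (y1 - y2)" .
        then have "d = (y1 - y2)^2" using ne by (intro t131) auto
        then show False using dd ne unfolding is_square_def by auto
      qed
      have xx: "x1 = x2"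
      proof (rule ccontr)
        assume ne: "x1 \<noteq> x2"
        have "(x1 - x2)^3 = x1^3 - x2^3" by (rule cube_diff(1)[OF three])
        also have "\<dots> = (e * y1^2 + a) * (x1 - x2)" using e1 yy by (simp add: algebra_simps)
        finally have "(x1 - x2)^3 = (e * y1^2 + a) * (x1 - x2)" .
        then have "e * y1^2 + a = (x1 - x2)^2" using ne by (intro t131) auto
        then have "x1 - x2 = 0" using H by blast
        then show False using ne by simp
      qed
      show "p1 = p2" using p1 p2 xx yy by simp
    qed
    then show "bij ?f" using finite_UNIV_inj_surj[of ?f] by (simp add: bij_def)
  qed
qed

end
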